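(* For every facility placement profile $\mathbf{s}$ and every client $v$ with $N_{\mathbf{s}}(v)\neq\varnothing$, the client $v$ belongs to $V_j$ where $j=\min\{i: F_i\cap N_{\mathbf{s}}(v)\neq\varnothing\}$.
   Context: Setting: a finite directed graph $H=(V,E,w)$ with vertex weights $w:V\to\mathbb{Q}_{>0}$ (vertices are clients), $w(X)=\sum_{v\in X}w(v)$, a finite set $F$ of facility agents, and a facility placement profile $\mathbf{s}=(s_f)_{f\in F}$ with $s_f\in V$. For $v\in V$ let $N(v)=\{v\}\cup\{u:(v,u)\in E\}$, $N_{\mathbf{s}}(v)=\{f\in F:s_f\in N(v)\}$, $A_{\mathbf{s}}(f)=\{v\in V: f\in N_{\mathbf{s}}(v)\}$ and $A_{\mathbf{s}}(T)=\bigcup_{f\in T}A_{\mathbf{s}}(f)$ for $T\subseteq F$. For nonempty $F^*\subseteq F$ and $V^*\subseteq V$, the minimum neighborhood set $\mathrm{MNS}_{\mathbf{s}}(F^*,V^* )$ is the (unique) subset of $F^*$ of largest cardinality among the nonempty $T\subseteq F^*$ minimizing $\frac{w(A_{\mathbf{s}}(T)\cap V^* )}{|T|}$. The class set is defined inductively: for $i\ge1$, while $F\setminus\bigcup_{j<i}F_j\neq\varnothing$, let $F_i=\mathrm{MNS}_{\mathbf{s}}\big(F\setminus\bigcup_{j<i}F_j,\ V\setminus\bigcup_{j<i}V_j\big)$ and $V_i=A_{\mathbf{s}}(F_i)\setminus\bigcup_{j<i}V_j$; the class is $C_i=(F_i,V_i)$. *)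

theory Defs
  imports Complex_Main
begin

definition nbh :: "('v \<times> 'v) set \<Rightarrow> 'v \<Rightarrow> 'v set" where
  "nbh E v = {v} \<union> {u. (v, u) \<in> E}"

definition Ns :: "('v \<times> 'v) set \<Rightarrow> 'f set \<Rightarrow> ('f \<Rightarrow> 'v) \<Rightarrow> 'v \<Rightarrow> 'f set" where
  "Ns E F s v = {f \<in> F. s f \<in> nbh E v}"

definition Af :: "'v set \<Rightarrow> ('v \<times> 'v) set \<Rightarrow> 'f set \<Rightarrow> ('f \<Rightarrow> 'v) \<Rightarrow> 'f \<Rightarrow> 'v set" where
  "Af V E F s f = {v \<in> V. f \<in> Ns E F s v}"

definition AT :: "'v set \<Rightarrow> ('v \<times> 'v) set \<Rightarrow> 'f set \<Rightarrow> ('f \<Rightarrow> 'v) \<Rightarrow> 'f set \<Rightarrow> 'v set" where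
  "AT V E F s T = (\<Union>f\<in>T. Af V E F s f)"

definition wt :: "('v \<Rightarrow> rat) \<Rightarrow> 'v set \<Rightarrow> rat" where
  "wt w X = (\<Sum>v\<in>X. w v)"

definition ratio :: "'v set \<Rightarrow> ('v \<times> 'v) set \<Rightarrow> ('v \<Rightarrow> rat) \<Rightarrow> 'f set \<Rightarrow> ('f \<Rightarrow> 'v)
    \<Rightarrow> 'v set \<Rightarrow> 'f set \<Rightarrow> rat" where
  "ratio V E w F s Vs T = wt w (AT V E F s T \<inter> Vs) / of_nat (card T)"

definition is_minimizer :: "'v set \<Rightarrow> ('v \<times> 'v) set \<Rightarrow> ('v \<Rightarrow> rat) \<Rightarrow> 'f set \<Rightarrow> ('f \<Rightarrow> 'v)
    \<Rightarrow> 'f set \<Rightarrow> 'v set \<Rightarrow> 'f set \<Rightarrow> bool" where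
  "is_minimizer V E w F s Fs Vs T \<longleftrightarrow>
     T \<subseteq> Fs \<and> T \<noteq> {} \<and>
     (\<forall>T'. T' \<subseteq> Fs \<and> T' \<noteq> {} \<longrightarrow> ratio V E w F s Vs T \<le> ratio V E w F s Vs T')"

definition MNS :: "'v set \<Rightarrow> ('v \<times> 'v) set \<Rightarrow> ('v \<Rightarrow> rat) \<Rightarrow> 'f set \<Rightarrow> ('f \<Rightarrow> 'v)
    \<Rightarrow> 'f set \<Rightarrow> 'v set \<Rightarrow> 'f set" where
  "MNS V E w F s Fs Vs = (THE T. is_minimizer V E w F s Fs Vs T \<and>
      (\<forall>T'. is_minimizer V E w F s Fs Vs T' \<longrightarrow> card T' \<le> card T))"

(* used V E w F s i = (F_1 \<union> ... \<union> F_i, V_1 \<union> ... \<union> V_i)  (as long as classes exist) *)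
primrec used :: "'v set \<Rightarrow> ('v \<times> 'v) set \<Rightarrow> ('v \<Rightarrow> rat) \<Rightarrow> 'f set \<Rightarrow> ('f \<Rightarrow> 'v)
    \<Rightarrow> nat \<Rightarrow> 'f set \<times> 'v set" where
  "used V E w F s 0 = ({}, {})"
| "used V E w F s (Suc i) =
     (let UF = fst (used V E w F s i); UV = snd (used V E w F s i) in
      if F - UF = {} then (UF, UV)
      else (let Fi = MNS V E w F s (F - UF) (V - UV)
            in (UF \<union> Fi, UV \<union> (AT V E F s Fi - UV))))"

definition class_exists :: "'v set \<Rightarrow> ('v \<times> 'v) set \<Rightarrow> ('v \<Rightarrow> rat) \<Rightarrow> 'f set \<Rightarrow> ('f \<Rightarrow> 'v)
    \<Rightarrow> nat \<Rightarrow> bool" where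
  "class_exists V E w F s i \<longleftrightarrow> 1 \<le> i \<and> F - fst (used V E w F s (i - 1)) \<noteq> {}"

definition classF :: "'v set \<Rightarrow> ('v \<times> 'v) set \<Rightarrow> ('v \<Rightarrow> rat) \<Rightarrow> 'f set \<Rightarrow> ('f \<Rightarrow> 'v)
    \<Rightarrow> nat \<Rightarrow> 'f set" where
  "classF V E w F s i = MNS V E w F s (F - fst (used V E w F s (i - 1)))
                                    (V - snd (used V E w F s (i - 1)))"

definition classV :: "'v set \<Rightarrow> ('v \<times> 'v) set \<Rightarrow> ('v \<Rightarrow> rat) \<Rightarrow> 'f set \<Rightarrow> ('f \<Rightarrow> 'v)
    \<Rightarrow> nat \<Rightarrow> 'v set" where
  "classV V E w F s i = AT V E F s (classF V E w F s i) - snd (used V E w F s (i - 1))"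

end

theory Submission
  imports Defs
begin

lemma AT_mem: "x \<in> AT V E F s T \<longleftrightarrow> x \<in> V \<and> T \<inter> Ns E F s x \<noteq> {}"
  unfolding AT_def Af_def by auto

lemma AT_sub: "AT V E F s T \<subseteq> V"
  unfolding AT_def Af_def by auto

lemma AT_Un: "AT V E F s (A \<union> B) = AT V E F s A \<union> AT V E F s B"
  unfolding AT_def by auto

lemma AT_Int: "AT V E F s (A \<inter> B) \<subseteq> AT V E F s A \<inter> AT V E F s B"
  unfolding AT_def by auto

lemma AT_empty: "AT V E F s {} = {}"
  unfolding AT_def by auto

lemma minimizer_Un:
  assumes fV: "finite V" and pos: "\<forall>u\<in>V. w u > 0" and fFs: "finite Fs"
    and m1: "is_minimizer V E w F s Fs Vs T1" and m2: "is_minimizer V E w F s Fs Vs T2"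
  shows "is_minimizer V E w F s Fs Vs (T1 \<union> T2)"
proof -
  define g where "g T = wt w (AT V E F s T \<inter> Vs)" for T
  define r where "r = ratio V E w F s Vs T1"
  have s1: "T1 \<subseteq> Fs" "T1 \<noteq> {}" and s2: "T2 \<subseteq> Fs" "T2 \<noteq> {}"
    using m1 m2 unfolding is_minimizer_def by auto
  have f1: "finite T1" and f2: "finite T2" using s1 s2 fFs finite_subset by auto
  have c1: "card T1 > 0" using f1 s1 by auto
  have c2: "card T2 > 0" using f2 s2 by auto
  have r2: "ratio V E w F s Vs T2 = r"
    using m1 m2 s1 s2 unfolding is_minimizer_def r_def by (meson order_antisym)
  have g1: "g T1 = r * of_nat (card T1)"
    using c1 unfolding r_def ratio_def g_def by simp
  have g2: "g T2 = r * of_nat (card T2)"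
    using c2 r2[symmetric] unfolding ratio_def g_def by simp
  have fin: "finite (AT V E F s T \<inter> Vs)" for T
    using fV AT_sub[of V E F s T] finite_subset by blast
  have gI: "g (T1 \<inter> T2) \<ge> r * of_nat (card (T1 \<inter> T2))"
  proof (cases "T1 \<inter> T2 = {}")
    case True
    then show ?thesis unfolding g_def wt_def by (simp add: AT_empty)
  next
    case False
    have "T1 \<inter> T2 \<subseteq> Fs" using s1 by blast
    then have "r \<le> ratio V E w F s Vs (T1 \<inter> T2)"
      using m1 False unfolding is_minimizer_def r_def by blast
    moreover have "card (T1 \<inter> T2) > 0" using False f1 by auto
    ultimately show ?thesis unfolding ratio_def g_def
      by (simp add: pos_le_divide_eq)
  qed
  have gU: "g (T1 \<union> T2) = g T1 + g T2 - wt w ((AT V E F s T1 \<inter> Vs) \<inter> (AT V E F s T2 \<inter> Vs))"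
    unfolding g_def wt_def AT_Un Int_Un_distrib2
    by (rule sum_Un[OF fin fin])
  have "g (T1 \<inter> T2) \<le> wt w ((AT V E F s T1 \<inter> Vs) \<inter> (AT V E F s T2 \<inter> Vs))"
    unfolding g_def wt_def
  proof (rule sum_mono2)
    show "finite (AT V E F s T1 \<inter> Vs \<inter> (AT V E F s T2 \<inter> Vs))" using fin by blast
    show "AT V E F s (T1 \<inter> T2) \<inter> Vs \<subseteq> AT V E F s T1 \<inter> Vs \<inter> (AT V E F s T2 \<inter> Vs)"
      using AT_Int[of V E F s T1 T2] by blast
    fix b assume "b \<in> AT V E F s T1 \<inter> Vs \<inter> (AT V E F s T2 \<inter> Vs) - AT V E F s (T1 \<inter> T2) \<inter> Vs"
    then have "b \<in> V" using AT_sub[of V E F s T1] by blast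
    then show "0 \<le> w b" using pos by (simp add: less_imp_le)
  qed
  then have "g (T1 \<union> T2) \<le> g T1 + g T2 - g (T1 \<inter> T2)" using gU by linarith
  also have "\<dots> \<le> r * of_nat (card T1) + r * of_nat (card T2) - r * of_nat (card (T1 \<inter> T2))"
    using g1 g2 gI by linarith
  also have "\<dots> = r * (of_nat (card T1) + of_nat (card T2) - of_nat (card (T1 \<inter> T2)))"
    by (simp add: algebra_simps)
  also have "of_nat (card T1) + of_nat (card T2) - of_nat (card (T1 \<inter> T2)) = (of_nat (card (T1 \<union> T2)) :: rat)"
  proof -
    have "card T1 + card T2 = card (T1 \<union> T2) + card (T1 \<inter> T2)" using card_Un_Int[OF f1 f2] .
    then have "(of_nat (card T1) :: rat) + of_nat (card T2) = of_nat (card (T1 \<union> T2)) + of_nat (card (T1 \<inter> T2))"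
      by (metis of_nat_add)
    then show ?thesis by linarith
  qed
  finally have gle: "g (T1 \<union> T2) \<le> r * of_nat (card (T1 \<union> T2))" .
  have cU: "card (T1 \<union> T2) > 0" using f1 f2 s1 by auto
  have cUr: "(0::rat) < of_nat (card (T1 \<union> T2))" using cU by simp
  have "g (T1 \<union> T2) / of_nat (card (T1 \<union> T2)) \<le> r"
    unfolding pos_divide_le_eq[OF cUr] using gle by (simp add: mult.commute)
  then have rU: "ratio V E w F s Vs (T1 \<union> T2) \<le> r"
    unfolding ratio_def g_def .
  have allr: "\<forall>T'. T' \<subseteq> Fs \<and> T' \<noteq> {} \<longrightarrow> r \<le> ratio V E w F s Vs T'"
    using m1 unfolding is_minimizer_def r_def by blast
  have "T1 \<union> T2 \<subseteq> Fs" "T1 \<union> T2 \<noteq> {}" using s1 s2 by auto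
  then show ?thesis unfolding is_minimizer_def using rU allr order_trans by blast
qed

lemma MNS_props:
  assumes fV: "finite V" and pos: "\<forall>u\<in>V. w u > 0" and fFs: "finite Fs" and ne: "Fs \<noteq> {}"
  shows "is_minimizer V E w F s Fs Vs (MNS V E w F s Fs Vs)"
proof -
  let ?S = "{T. T \<subseteq> Fs \<and> T \<noteq> {}}"
  let ?rt = "ratio V E w F s Vs"
  have fS: "finite ?S" using fFs by simp
  have neS: "Fs \<in> ?S" using ne by simp
  have "finite (?rt ` ?S)" "?rt ` ?S \<noteq> {}" using fS neS by auto
  then have "Min (?rt ` ?S) \<in> ?rt ` ?S" by (rule Min_in)
  then obtain T0 where T0: "T0 \<in> ?S" "Min (?rt ` ?S) = ?rt T0" by (rule imageE)
  have "?rt T0 \<le> ?rt T'" if "T' \<in> ?S" for T'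
    unfolding T0(2)[symmetric] by (rule Min_le) (use fS that in auto)
  then have "is_minimizer V E w F s Fs Vs T0"
    unfolding is_minimizer_def using T0 by auto
  let ?M = "{T. is_minimizer V E w F s Fs Vs T}"
  have fM: "finite ?M" by (rule finite_subset[OF _ fS]) (auto simp: is_minimizer_def)
  have neM: "card ` ?M \<noteq> {}" using \<open>is_minimizer V E w F s Fs Vs T0\<close> by auto
  have "Max (card ` ?M) \<in> card ` ?M" using fM neM by (intro Max_in) auto
  then obtain T1 where T1: "is_minimizer V E w F s Fs Vs T1" "card T1 = Max (card ` ?M)" by auto
  have T1max: "\<forall>T'. is_minimizer V E w F s Fs Vs T' \<longrightarrow> card T' \<le> card T1"
    using T1 fM by auto
  have uniq: "T = T1" if "is_minimizer V E w F s Fs Vs T"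
      "\<forall>T'. is_minimizer V E w F s Fs Vs T' \<longrightarrow> card T' \<le> card T" for T
  proof -
    have mU: "is_minimizer V E w F s Fs Vs (T \<union> T1)"
      using minimizer_Un[OF fV pos fFs that(1) T1(1)] .
    have fU: "finite (T \<union> T1)" using mU fFs finite_subset unfolding is_minimizer_def by blast
    have "card (T \<union> T1) \<le> card T" using that(2) mU by blast
    then have "T \<union> T1 = T" using fU by (metis Un_upper1 card_seteq)
    moreover have "card (T \<union> T1) \<le> card T1" using T1max mU by blast
    then have "T \<union> T1 = T1" using fU by (metis Un_upper2 card_seteq)
    ultimately show ?thesis by simp
  qed
  have "MNS V E w F s Fs Vs = T1"
    unfolding MNS_def
    by (rule the_equality) (use T1 T1max in blast, use uniq in blast)
  then show ?thesis using T1 by simp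
qed

theorem mainTheorem7:
  fixes V :: "'v set" and E :: "('v \<times> 'v) set" and w :: "'v \<Rightarrow> rat"
    and F :: "'f set" and s :: "'f \<Rightarrow> 'v" and v :: 'v
  assumes "finite V" and "E \<subseteq> V \<times> V" and "\<forall>u\<in>V. w u > 0"
    and "finite F" and "\<forall>f\<in>F. s f \<in> V"
    and "v \<in> V" and "Ns E F s v \<noteq> {}"
  shows "\<exists>j. class_exists V E w F s j \<and> classF V E w F s j \<inter> Ns E F s v \<noteq> {}
           \<and> (\<forall>i. class_exists V E w F s i \<and> classF V E w F s i \<inter> Ns E F s v \<noteq> {} \<longrightarrow> j \<le> i)
           \<and> v \<in> classV V E w F s j"
proof -
  define U where "U i = fst (used V E w F s i)" for i
  define W where "W i = snd (used V E w F s i)" for i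
  have step: "U (Suc i) = (if F - U i = {} then U i else U i \<union> classF V E w F s (Suc i))
      \<and> W (Suc i) = (if F - U i = {} then W i else W i \<union> (AT V E F s (classF V E w F s (Suc i)) - W i))" for i
    unfolding U_def W_def classF_def by (simp add: Let_def)
  have cF: "F - U i \<noteq> {} \<Longrightarrow> classF V E w F s (Suc i) \<subseteq> F - U i \<and> classF V E w F s (Suc i) \<noteq> {}" for i
  proof -
    assume a: "F - U i \<noteq> {}"
    have "finite (F - U i)" using assms(4) by simp
    from MNS_props[OF assms(1) assms(3) this a, of E F s "V - W i"]
    have "is_minimizer V E w F s (F - U i) (V - W i) (classF V E w F s (Suc i))"
      unfolding classF_def U_def W_def by simp
    then show ?thesis unfolding is_minimizer_def by blast
  qed
  have inv: "U i \<subseteq> F \<and> (i \<le> card (U i) \<or> U i = F) \<and> W i \<subseteq> AT V E F s (U i)" for i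
  proof (induction i)
    case 0
    then show ?case unfolding U_def W_def by simp
  next
    case (Suc i)
    show ?case
    proof (cases "F - U i = {}")
      case True
      then show ?thesis using Suc step[of i] by auto
    next
      case False
      have e: "U (Suc i) = U i \<union> classF V E w F s (Suc i)" using step[of i] False by simp
      have e2: "W (Suc i) = W i \<union> (AT V E F s (classF V E w F s (Suc i)) - W i)" using step[of i] False by simp
      have c: "classF V E w F s (Suc i) \<subseteq> F - U i" "classF V E w F s (Suc i) \<noteq> {}" using cF False by auto
      have sub: "U (Suc i) \<subseteq> F" using e c Suc by auto
      have "U i \<noteq> F" using False by auto
      hence "i \<le> card (U i)" using Suc by auto
      moreover have "card (U i) < card (U (Suc i))"
      proof (rule psubset_card_mono)
        show "finite (U (Suc i))" using sub assms(4) by (rule finite_subset)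
        show "U i \<subset> U (Suc i)" using e c by blast
      qed
      ultimately have "Suc i \<le> card (U (Suc i))" by simp
      moreover have "W (Suc i) \<subseteq> AT V E F s (U (Suc i))" unfolding e e2 AT_Un using Suc by blast
      ultimately show ?thesis using sub by auto
    qed
  qed
  have "U (Suc (card F)) = F"
  proof -
    have i1: "U (Suc (card F)) \<subseteq> F" using inv[of "Suc (card F)"] by simp
    have i2: "Suc (card F) \<le> card (U (Suc (card F))) \<or> U (Suc (card F)) = F" using inv[of "Suc (card F)"] by simp
    have "card (U (Suc (card F))) \<le> card F" using card_mono[OF assms(4) i1] .
    then show ?thesis using i2 by linarith
  qed
  then have exn: "\<exists>n. U n \<inter> Ns E F s v \<noteq> {}" using assms(7) unfolding Ns_def by blast
  define n where "n = (LEAST n. U n \<inter> Ns E F s v \<noteq> {})"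
  have n1: "U n \<inter> Ns E F s v \<noteq> {}" unfolding n_def using LeastI_ex[OF exn] .
  have n2: "m < n \<Longrightarrow> U m \<inter> Ns E F s v = {}" for m unfolding n_def using not_less_Least by blast
  have "n \<noteq> 0" using n1 unfolding U_def by (cases n) simp_all
  then obtain k where k: "n = Suc k" using not0_implies_Suc by blast
  have Uk: "U k \<inter> Ns E F s v = {}" using n2 k by simp
  have ne: "F - U k \<noteq> {}"
  proof
    assume "F - U k = {}"
    then have "U (Suc k) = U k" using step[of k] by simp
    then have "U n = U k" using k by simp
    then show False using Uk n1 by simp
  qed
  have eS: "U (Suc k) = U k \<union> classF V E w F s (Suc k)" using step[of k] ne by simp
  have ce: "class_exists V E w F s (Suc k)" unfolding class_exists_def U_def[symmetric] using ne by simp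
  have hit: "classF V E w F s (Suc k) \<inter> Ns E F s v \<noteq> {}" using eS Uk n1 k by blast
  have least: "\<forall>i. class_exists V E w F s i \<and> classF V E w F s i \<inter> Ns E F s v \<noteq> {} \<longrightarrow> Suc k \<le> i"
  proof (intro allI impI)
    fix i assume a: "class_exists V E w F s i \<and> classF V E w F s i \<inter> Ns E F s v \<noteq> {}"
    have "i \<noteq> 0" using a unfolding class_exists_def by simp
    then obtain m where m: "i = Suc m" using not0_implies_Suc by blast
    have "F - U m \<noteq> {}" using a m unfolding class_exists_def U_def by simp
    then have "U (Suc m) \<inter> Ns E F s v \<noteq> {}" using step[of m] a m by auto
    then show "Suc k \<le> i" using n2 k m by (meson not_less)
  qed
  have vin: "v \<in> classV V E w F s (Suc k)"
  proof -
    have "v \<in> AT V E F s (classF V E w F s (Suc k))" using hit assms(6) AT_mem[of v V E F s "classF V E w F s (Suc k)"] by blast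
    moreover have "v \<notin> W k" using inv[of k] Uk AT_mem[of v V E F s "U k"] by blast
    ultimately show ?thesis unfolding classV_def W_def by simp
  qed
  show ?thesis by (rule exI[of _ "Suc k"]) (intro conjI ce hit least vin)
qed

end
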